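(* Let $(k,N)\in\{(2,27),(2,32),(2,36),(2,49),(4,9)\}$. For each integer $n\ge2$, let $\phi_n\in M_{2-k}^\infty(\Gamma_0(N))\cap\mathbb{Z}((q))$ be any form of the shape $\phi_n=q^{-n}+A_n(-1)q^{-1}+\sum_{m\ge1}A_n(m)q^m$ if $k=2$, or $\phi_n=q^{-n}+\sum_{m\ge-1}A_n(m)q^m$ if $k=4$. For each admissible $m$ (namely $m\in\{-1\}\cup\{1,2,3,\dots\}$ if $k=2$, and $m\ge-1$ if $k=4$), let $F_m$ be the unique element of $S_k^\infty(\Gamma_0(N))\cap\mathbb{Z}((q))$ of the form $F_m=-q^{-m}+\sum_{n\ge2}C_m(n)q^n$. Then for all integers $n\ge2$ and all admissible $m$, \[C_m(n)=A_n(m).\]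
   Context: $q=e^{2\pi i z}$. $M_{w}^\infty(\Gamma_0(N))$ is the space of weakly holomorphic modular forms of weight $w$ on $\Gamma_0(N)$ (trivial character), holomorphic on the upper half-plane and at every cusp except possibly $\infty$; $S_w^\infty(\Gamma_0(N))$ is the subspace of those vanishing at every cusp except possibly $\infty$. $\mathbb{Z}((q))$ denotes Laurent series in $q$ with integer coefficients. (Such $\phi_n$ and $F_m$ exist for each of the listed $(k,N)$.) *)

theory Defs
  imports "HOL-Analysis.Analysis"
begin

text \<open>Integer 2x2 matrices are represented as tuples (a,b,c,d) for the matrix
  with rows (a b) and (c d).\<close>

definition uhp :: "complex set" where
  "uhp = {z. Im z > 0}"

definition SL2Z :: "(int \<times> int \<times> int \<times> int) set" where
  "SL2Z = {(a,b,c,d). a*d - b*c = 1}"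

definition Gamma0 :: "int \<Rightarrow> (int \<times> int \<times> int \<times> int) set" where
  "Gamma0 N = {(a,b,c,d). a*d - b*c = 1 \<and> N dvd c}"

definition moebius :: "int \<times> int \<times> int \<times> int \<Rightarrow> complex \<Rightarrow> complex" where
  "moebius = (\<lambda>(a,b,c,d) z. (of_int a * z + of_int b) / (of_int c * z + of_int d))"

definition slash :: "int \<Rightarrow> (complex \<Rightarrow> complex) \<Rightarrow> int \<times> int \<times> int \<times> int \<Rightarrow> complex \<Rightarrow> complex" where
  "slash w f = (\<lambda>(a,b,c,d) z. (of_int c * z + of_int d) powi (- w) * f (moebius (a,b,c,d) z))"

text \<open>The cusp gamma(\<infinity>) is Gamma0(N)-equivalent to \<infinity>: some delta in Gamma0(N) has
  delta*gamma upper triangular (lower-left entry 0).\<close>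
definition cusp_equiv_infty :: "int \<Rightarrow> int \<times> int \<times> int \<times> int \<Rightarrow> bool" where
  "cusp_equiv_infty N = (\<lambda>(a,b,c,d). \<exists>a' b' c' d'. (a',b',c',d') \<in> Gamma0 N \<and> c'*a + d'*c = 0)"

text \<open>M_w^\<infinity>(Gamma0(N)): holomorphic on H, invariant under the weight-w slash action
  of Gamma0(N), meromorphic at \<infinity> (at most exponential growth in Im z, which for a
  1-periodic holomorphic function means a pole of finite order in q), and holomorphic
  (bounded) at every cusp not equivalent to \<infinity>.\<close>
definition wh_modular_form :: "int \<Rightarrow> int \<Rightarrow> (complex \<Rightarrow> complex) \<Rightarrow> bool" where
  "wh_modular_form w N f \<longleftrightarrow>
     f holomorphic_on uhp \<and>
     (\<forall>\<gamma>\<in>Gamma0 N. \<forall>z\<in>uhp. slash w f \<gamma> z = f z) \<and>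
     (\<exists>C B. \<forall>z. Im z \<ge> 1 \<longrightarrow> norm (f z) \<le> B * exp (C * Im z)) \<and>
     (\<forall>\<gamma>\<in>SL2Z. \<not> cusp_equiv_infty N \<gamma> \<longrightarrow>
        (\<exists>B. \<forall>z. Im z \<ge> 1 \<longrightarrow> norm (slash w f \<gamma> z) \<le> B))"

definition wh_cusp_form :: "int \<Rightarrow> int \<Rightarrow> (complex \<Rightarrow> complex) \<Rightarrow> bool" where
  "wh_cusp_form w N f \<longleftrightarrow>
     wh_modular_form w N f \<and>
     (\<forall>\<gamma>\<in>SL2Z. \<not> cusp_equiv_infty N \<gamma> \<longrightarrow>
        (\<forall>\<epsilon>>0. \<exists>Y. \<forall>z. Im z \<ge> Y \<longrightarrow> norm (slash w f \<gamma> z) \<le> \<epsilon>))"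

definition has_int_qexp :: "(complex \<Rightarrow> complex) \<Rightarrow> (int \<Rightarrow> int) \<Rightarrow> bool" where
  "has_int_qexp f a \<longleftrightarrow>
     (\<exists>M. \<forall>n<M. a n = 0) \<and>
     (\<forall>z\<in>uhp. ((\<lambda>n::int. of_int (a n) * exp (2 * of_real pi * \<i> * of_int n * z)) has_sum f z) UNIV)"

end

theory Submission
  imports Defs "HOL-Complex_Analysis.Complex_Analysis" "HOL-Real_Asymp.Real_Asymp"
begin


definition mmul :: "int \<times> int \<times> int \<times> int \<Rightarrow> int \<times> int \<times> int \<times> int \<Rightarrow> int \<times> int \<times> int \<times> int" where
  "mmul = (\<lambda>(a,b,c,d) (a',b',c',d'). (a*a'+b*c', a*b'+b*d', c*a'+d*c', c*b'+d*d'))"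

definition minv :: "int \<times> int \<times> int \<times> int \<Rightarrow> int \<times> int \<times> int \<times> int" where
  "minv = (\<lambda>(a,b,c,d). (d,-b,-c,a))"

definition jf :: "int \<times> int \<times> int \<times> int \<Rightarrow> complex \<Rightarrow> complex" where
  "jf = (\<lambda>(a,b,c,d) z. of_int c * z + of_int d)"

lemma mmul_assoc: "mmul (mmul x y) z = mmul x (mmul y z)"
  by (cases x; cases y; cases z) (simp add: mmul_def algebra_simps)


lemma SL2Z_mmul': "x \<in> SL2Z \<Longrightarrow> y \<in> SL2Z \<Longrightarrow> mmul x y \<in> SL2Z"
  by (cases x; cases y) (auto simp: mmul_def SL2Z_def algebra_simps)


lemma slash_eq: "slash w f \<gamma> z = jf \<gamma> z powi (-w) * f (moebius \<gamma> z)"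
  by (cases \<gamma>) (simp add: slash_def jf_def)

lemma jf_nonzero:
  assumes "\<gamma> \<in> SL2Z" "z \<in> uhp" shows "jf \<gamma> z \<noteq> 0"
proof -
  obtain a b c d where g: "\<gamma> = (a,b,c,d)" by (cases \<gamma>) auto
  have det: "a*d - b*c = 1" using assms g by (simp add: SL2Z_def)
  have iz: "Im z > 0" using assms by (simp add: uhp_def)
  show ?thesis
  proof (cases "c = 0")
    case True
    then have "d \<noteq> 0" using det by auto
    then show ?thesis using True g by (simp add: jf_def)
  next
    case False
    have "Im (jf \<gamma> z) = of_int c * Im z" using g by (simp add: jf_def)
    then have "Im (jf \<gamma> z) \<noteq> 0" using False iz by simp
    then show ?thesis by auto
  qed
qed

lemma Im_moebius:
  assumes "\<gamma> \<in> SL2Z" shows "Im (moebius \<gamma> z) = Im z / (cmod (jf \<gamma> z))^2"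
proof -
  obtain a b c d where g: "\<gamma> = (a,b,c,d)" by (cases \<gamma>) auto
  have det: "real_of_int a * real_of_int d - real_of_int b * real_of_int c = 1"
    using assms g by (simp add: SL2Z_def) (metis of_int_1 of_int_diff of_int_mult)
  have "Im (moebius \<gamma> z) = (Im (of_int a * z + of_int b) * Re (jf \<gamma> z) - Re (of_int a * z + of_int b) * Im (jf \<gamma> z)) / (cmod (jf \<gamma> z))^2"
    using g by (simp add: moebius_def jf_def Im_divide cmod_power2)
  also have "Im (of_int a * z + of_int b) * Re (jf \<gamma> z) - Re (of_int a * z + of_int b) * Im (jf \<gamma> z)
     = (real_of_int a * real_of_int d - real_of_int b * real_of_int c) * Im z"
    using g by (simp add: jf_def algebra_simps)
  finally show ?thesis using det by simp
qed

lemma moebius_uhp: "\<gamma> \<in> SL2Z \<Longrightarrow> z \<in> uhp \<Longrightarrow> moebius \<gamma> z \<in> uhp"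
  using Im_moebius[of \<gamma> z] jf_nonzero[of \<gamma> z] by (simp add: uhp_def)

lemma moebius_jf: "moebius \<gamma> z = (case \<gamma> of (a,b,c,d) \<Rightarrow> of_int a * z + of_int b) / jf \<gamma> z"
  by (cases \<gamma>) (simp add: moebius_def jf_def)

lemma moebius_mmul:
  assumes x: "x \<in> SL2Z" and y: "y \<in> SL2Z" and z: "z \<in> uhp"
  shows "moebius (mmul x y) z = moebius x (moebius y z)"
proof -
  obtain a b c d where g: "x = (a,b,c,d)" by (cases x) auto
  obtain a' b' c' d' where h: "y = (a',b',c',d')" by (cases y) auto
  have v: "of_int c' * z + of_int d' \<noteq> 0" using jf_nonzero[OF y z] h by (simp add: jf_def)
  have w: "of_int (c*a'+d*c') * z + of_int (c*b'+d*d') \<noteq> 0"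
    using jf_nonzero[OF SL2Z_mmul'[OF x y] z] g h by (simp add: jf_def mmul_def)
  have w': "of_int c * (of_int a' * z + of_int b') + of_int d * (of_int c' * z + of_int d') \<noteq> 0"
    using w by (simp add: algebra_simps)
  define u where "u = of_int a' * z + of_int b'"
  define v where "v = of_int c' * z + of_int d'"
  have v0: "v \<noteq> 0" using v v_def by simp
  have w0: "of_int c * u + of_int d * v \<noteq> 0" using w' u_def v_def by simp
  have "moebius x (moebius y z) = (of_int a * (u/v) + of_int b) / (of_int c * (u/v) + of_int d)"
    using g h by (simp add: moebius_def u_def v_def)
  also have "\<dots> = ((of_int a * u + of_int b * v)/v) / ((of_int c * u + of_int d * v)/v)"
  proof -
    have e1: "of_int a * (u/v) + of_int b = (of_int a * u + of_int b * v)/v" using v0 by (simp add: field_simps)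
    have e2: "of_int c * (u/v) + of_int d = (of_int c * u + of_int d * v)/v" using v0 by (simp add: field_simps)
    show ?thesis by (simp only: e1 e2)
  qed
  also have "\<dots> = (of_int a * u + of_int b * v) / (of_int c * u + of_int d * v)"
    using v0 by simp
  also have "\<dots> = moebius (mmul x y) z"
    using g h by (simp add: moebius_def mmul_def u_def v_def algebra_simps)
  finally show ?thesis ..
qed

lemma jf_mmul:
  assumes y: "y \<in> SL2Z" and z: "z \<in> uhp"
  shows "jf (mmul x y) z = jf x (moebius y z) * jf y z"
proof -
  obtain a b c d where g: "x = (a,b,c,d)" by (cases x) auto
  obtain a' b' c' d' where h: "y = (a',b',c',d')" by (cases y) auto
  have v: "of_int c' * z + of_int d' \<noteq> 0" using jf_nonzero[OF y z] h by (simp add: jf_def)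
  show ?thesis using g h v
    by (simp add: moebius_def jf_def mmul_def field_simps)
qed

lemma slash_mmul:
  assumes x: "x \<in> SL2Z" and y: "y \<in> SL2Z" and z: "z \<in> uhp"
  shows "slash w f (mmul x y) z = slash w (slash w f x) y z"
proof -
  have n1: "jf y z \<noteq> 0" using jf_nonzero[OF y z] .
  have n2: "jf x (moebius y z) \<noteq> 0" using jf_nonzero[OF x moebius_uhp[OF y z]] .
  show ?thesis
    using n1 n2 by (simp add: slash_eq moebius_mmul[OF x y z] jf_mmul[OF y z] power_int_mult_distrib)
qed

lemma slash_cong:
  assumes "\<And>z. z \<in> uhp \<Longrightarrow> f z = g z" "\<gamma> \<in> SL2Z" "z \<in> uhp"
  shows "slash w f \<gamma> z = slash w g \<gamma> z"
  using assms moebius_uhp by (simp add: slash_eq)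

lemma slash_mult:
  assumes "\<gamma> \<in> SL2Z" "z \<in> uhp"
  shows "slash (w1 + w2) (\<lambda>z. f z * g z) \<gamma> z = slash w1 f \<gamma> z * slash w2 g \<gamma> z"
proof -
  have "jf \<gamma> z \<noteq> 0" using jf_nonzero assms by blast
  then have "jf \<gamma> z powi (- (w1 + w2)) = jf \<gamma> z powi (-w1) * jf \<gamma> z powi (-w2)"
    by (simp add: power_int_add[symmetric])
  then show ?thesis by (simp add: slash_eq)
qed

lemma open_uhp: "open uhp"
  unfolding uhp_def by (simp add: open_halfspace_Im_gt)

lemma convex_uhp: "convex uhp"
  unfolding uhp_def by (simp add: convex_halfspace_Im_gt)

lemma slash_holo:
  assumes f: "f holomorphic_on uhp" and g: "\<gamma> \<in> SL2Z"
  shows "slash w f \<gamma> holomorphic_on uhp"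
proof -
  obtain a b c d where h: "\<gamma> = (a,b,c,d)" by (cases \<gamma>) auto
  have nz: "\<forall>z\<in>uhp. of_int c * z + of_int d \<noteq> (0::complex)" using jf_nonzero[OF g] h by (simp add: jf_def)
  have m: "moebius \<gamma> holomorphic_on uhp"
    using nz h unfolding moebius_def by (auto intro!: holomorphic_intros)
  have "(f \<circ> moebius \<gamma>) holomorphic_on uhp"
    by (rule holomorphic_on_compose_gen[OF m f]) (use moebius_uhp[OF g] in auto)
  then have "(\<lambda>z. f (moebius \<gamma> z)) holomorphic_on uhp" by (simp add: o_def)
  moreover have "(\<lambda>z. (of_int c * z + of_int d) powi (-w)) holomorphic_on uhp"
    using nz by (intro holomorphic_intros) auto
  ultimately have "(\<lambda>z. (of_int c * z + of_int d) powi (-w) * f (moebius \<gamma> z)) holomorphic_on uhp"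
    by (intro holomorphic_intros) (use nz in auto)
  then show ?thesis using h by (simp add: slash_def)
qed


definition idm :: "int \<times> int \<times> int \<times> int" where "idm = (1,0,0,1)"

lemma Gamma0_SL2Z: "x \<in> Gamma0 N \<Longrightarrow> x \<in> SL2Z"
  by (cases x) (simp add: Gamma0_def SL2Z_def)

lemma idm_Gamma0: "idm \<in> Gamma0 N" by (simp add: idm_def Gamma0_def)
lemma idm_SL2Z: "idm \<in> SL2Z" by (simp add: idm_def SL2Z_def)

lemma mmul_Gamma0: "x \<in> Gamma0 N \<Longrightarrow> y \<in> Gamma0 N \<Longrightarrow> mmul x y \<in> Gamma0 N"
proof -
  assume x: "x \<in> Gamma0 N" and y: "y \<in> Gamma0 N"
  obtain a b c d where g: "x = (a,b,c,d)" by (cases x) auto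
  obtain a' b' c' d' where h: "y = (a',b',c',d')" by (cases y) auto
  have "mmul x y \<in> SL2Z" using SL2Z_mmul' Gamma0_SL2Z x y by blast
  moreover have "N dvd c*a'+d*c'" using x y g h by (simp add: Gamma0_def)
  ultimately show ?thesis using g h by (simp add: Gamma0_def SL2Z_def mmul_def)
qed

lemma minv_Gamma0: "x \<in> Gamma0 N \<Longrightarrow> minv x \<in> Gamma0 N"
  by (cases x) (simp add: Gamma0_def minv_def algebra_simps)

lemma minv_SL2Z: "x \<in> SL2Z \<Longrightarrow> minv x \<in> SL2Z"
  by (cases x) (simp add: SL2Z_def minv_def algebra_simps)

lemma mmul_minv: "x \<in> SL2Z \<Longrightarrow> mmul x (minv x) = idm"
  by (cases x) (simp add: SL2Z_def minv_def mmul_def idm_def algebra_simps)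

lemma minv_mmul: "x \<in> SL2Z \<Longrightarrow> mmul (minv x) x = idm"
  by (cases x) (simp add: SL2Z_def minv_def mmul_def idm_def algebra_simps)

lemma mmul_idm[simp]: "mmul x idm = x" "mmul idm x = x"
  by (cases x; simp add: mmul_def idm_def)+

lemma slash_idm: "slash w f idm z = f z"
  by (simp add: slash_def idm_def moebius_def)

definition coset :: "int \<Rightarrow> int \<times> int \<times> int \<times> int \<Rightarrow> (int \<times> int \<times> int \<times> int) set" where
  "coset N g = (\<lambda>\<delta>. mmul \<delta> g) ` Gamma0 N"

definition Cos :: "int \<Rightarrow> (int \<times> int \<times> int \<times> int) set set" where
  "Cos N = coset N ` SL2Z"

lemma coset_self: "g \<in> coset N g"
  unfolding coset_def using idm_Gamma0 by (metis image_eqI mmul_idm(2))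

lemma coset_SL2Z: "g \<in> SL2Z \<Longrightarrow> coset N g \<subseteq> SL2Z"
  unfolding coset_def using SL2Z_mmul' Gamma0_SL2Z by blast

lemma coset_mem_eq:
  assumes "g' \<in> coset N g" shows "coset N g' = coset N g"
proof -
  obtain \<delta> where d: "\<delta> \<in> Gamma0 N" "g' = mmul \<delta> g" using assms unfolding coset_def by auto
  have "coset N g' \<subseteq> coset N g"
  proof
    fix x assume "x \<in> coset N g'"
    then obtain e where e: "e \<in> Gamma0 N" "x = mmul e g'" unfolding coset_def by auto
    then have "x = mmul (mmul e \<delta>) g" using d by (simp add: mmul_assoc)
    then show "x \<in> coset N g" unfolding coset_def using mmul_Gamma0 e d by blast
  qed
  moreover have "coset N g \<subseteq> coset N g'"
  proof
    fix x assume "x \<in> coset N g"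
    then obtain e where e: "e \<in> Gamma0 N" "x = mmul e g" unfolding coset_def by auto
    have "mmul (minv \<delta>) g' = g" using d minv_mmul Gamma0_SL2Z
      by (metis mmul_assoc mmul_idm(2))
    then have "x = mmul (mmul e (minv \<delta>)) g'" using e by (simp add: mmul_assoc)
    then show "x \<in> coset N g'" unfolding coset_def using mmul_Gamma0 minv_Gamma0 e d by blast
  qed
  ultimately show ?thesis by blast
qed

lemma coset_eq_key:
  assumes g: "g \<in> SL2Z" and g': "g' \<in> SL2Z"
    and k: "(case g of (a,b,c,d) \<Rightarrow> (c mod N, d mod N)) = (case g' of (a,b,c,d) \<Rightarrow> (c mod N, d mod N))"
  shows "coset N g' = coset N g"
proof -
  obtain a b c d where h: "g = (a,b,c,d)" by (cases g) auto
  obtain a' b' c' d' where h': "g' = (a',b',c',d')" by (cases g') auto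
  have "N dvd c' - c" "N dvd d' - d" using k h h' by (auto simp: mod_eq_dvd_iff dvd_diff_commute)
  then have "N dvd (c' - c) * d - (d' - d) * c" by auto
  then have dv: "N dvd c' * d - d' * c" by (simp add: algebra_simps)
  have "mmul g' (minv g) \<in> SL2Z" using SL2Z_mmul' minv_SL2Z g g' by blast
  then have \<delta>: "mmul g' (minv g) \<in> Gamma0 N" using dv h h' by (simp add: SL2Z_def Gamma0_def mmul_def minv_def algebra_simps)
  have "g' = mmul (mmul g' (minv g)) g" using minv_mmul[OF g] by (simp add: mmul_assoc)
  then have "g' \<in> coset N g" using \<delta> unfolding coset_def by blast
  then show ?thesis by (rule coset_mem_eq)
qed

lemma finite_Cos: assumes "N > 0" shows "finite (Cos N)"
proof -
  define key where "key = (\<lambda>g::int\<times>int\<times>int\<times>int. case g of (a,b,c,d) \<Rightarrow> (c mod N, d mod N))"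
  define h where "h = (\<lambda>p. coset N (SOME g. g \<in> SL2Z \<and> key g = p))"
  have "Cos N \<subseteq> h ` ({0..<N} \<times> {0..<N})"
  proof
    fix C assume "C \<in> Cos N"
    then obtain g where g: "g \<in> SL2Z" "C = coset N g" unfolding Cos_def by auto
    have ex: "\<exists>g'. g' \<in> SL2Z \<and> key g' = key g" using g by blast
    define g0 where "g0 = (SOME g'. g' \<in> SL2Z \<and> key g' = key g)"
    have g0: "g0 \<in> SL2Z" "key g0 = key g" using someI_ex[OF ex] unfolding g0_def by auto
    have "coset N g0 = coset N g" using coset_eq_key[OF g(1) g0(1)] g0(2) by (simp add: key_def)
    moreover have "key g \<in> {0..<N} \<times> {0..<N}" using assms by (cases g) (simp add: key_def)
    moreover have "h (key g) = coset N g0" unfolding h_def g0_def by simp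
    ultimately show "C \<in> h ` ({0..<N} \<times> {0..<N})" using g(2) by (intro image_eqI[of _ _ "key g"]) auto
  qed
  then show ?thesis by (rule finite_subset) simp
qed

definition rep :: "(int \<times> int \<times> int \<times> int) set \<Rightarrow> int \<times> int \<times> int \<times> int" where
  "rep C = (SOME g. g \<in> C)"

lemma rep_props:
  assumes "C \<in> Cos N" shows "rep C \<in> C" "rep C \<in> SL2Z" "coset N (rep C) = C"
proof -
  obtain g where g: "g \<in> SL2Z" "C = coset N g" using assms unfolding Cos_def by auto
  show r: "rep C \<in> C" unfolding rep_def using coset_self g by (metis someI_ex)
  show "rep C \<in> SL2Z" using r g coset_SL2Z by blast
  show "coset N (rep C) = C" using coset_mem_eq r g by blast
qed

lemma coset_in_Cos: "g \<in> SL2Z \<Longrightarrow> coset N g \<in> Cos N"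
  unfolding Cos_def by blast

lemma rmul_inj:
  assumes s: "s \<in> SL2Z"
  shows "inj_on (\<lambda>C. coset N (mmul (rep C) s)) (Cos N)"
proof (rule inj_onI)
  fix C1 C2 assume c1: "C1 \<in> Cos N" and c2: "C2 \<in> Cos N"
    and eq: "coset N (mmul (rep C1) s) = coset N (mmul (rep C2) s)"
  have "mmul (rep C1) s \<in> coset N (mmul (rep C2) s)" using eq coset_self by metis
  then obtain \<delta> where d: "\<delta> \<in> Gamma0 N" "mmul (rep C1) s = mmul \<delta> (mmul (rep C2) s)"
    unfolding coset_def by auto
  then have "mmul (mmul (rep C1) s) (minv s) = mmul (mmul \<delta> (mmul (rep C2) s)) (minv s)" by simp
  then have "rep C1 = mmul \<delta> (rep C2)" by (simp add: mmul_assoc mmul_minv[OF s])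
  then have "rep C1 \<in> coset N (rep C2)" using d unfolding coset_def by blast
  then have "coset N (rep C1) = coset N (rep C2)" by (rule coset_mem_eq)
  then show "C1 = C2" using rep_props c1 c2 by metis
qed

lemma rmul_perm:
  assumes s: "s \<in> SL2Z" and N: "N > 0"
  shows "(\<lambda>C. coset N (mmul (rep C) s)) ` (Cos N) = Cos N"
  apply (rule endo_inj_surj[OF finite_Cos[OF N] _ rmul_inj[OF s]])
  using rep_props coset_in_Cos SL2Z_mmul' s by blast

lemma Gamma0_coset: "coset N idm = Gamma0 N"
  unfolding coset_def by simp


lemma uhp_inv: "z \<in> uhp \<Longrightarrow> -1/z \<in> uhp"
proof -
  assume z: "z \<in> uhp"
  then have "z \<noteq> 0" by (auto simp: uhp_def)
  have "Im (-1/z) = Im z / (cmod z)^2" by (simp add: Im_divide cmod_power2)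
  then show ?thesis using z \<open>z \<noteq> 0\<close> by (simp add: uhp_def)
qed

lemma uhp_plus1: "z \<in> uhp \<Longrightarrow> z + 1 \<in> uhp" by (simp add: uhp_def)

lemma level1:
  fixes G :: "complex \<Rightarrow> complex"
  assumes hol: "G holomorphic_on uhp"
    and T: "\<And>z. z \<in> uhp \<Longrightarrow> G (z+1) = G z"
    and S: "\<And>z. z \<in> uhp \<Longrightarrow> G (-1/z) = z^2 * G z"
  shows "\<exists>H. (\<forall>z\<in>uhp. (H has_field_derivative G z) (at z)) \<and> (\<forall>z\<in>uhp. H (z+1) = H z)"
proof -
  obtain H where H0: "\<And>z. z \<in> uhp \<Longrightarrow> (H has_field_derivative G z) (at z within uhp)"
    using holomorphic_convex_primitive'[OF convex_uhp open_uhp hol] by blast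
  have H: "(H has_field_derivative G z) (at z)" if "z \<in> uhp" for z
    using H0[OF that] at_within_open[OF that open_uhp] by simp
  have "\<exists>c. \<forall>z\<in>uhp. H (z+1) - H z = c"
  proof (rule has_field_derivative_zero_constant[OF convex_uhp])
    fix z assume z: "z \<in> uhp"
    have "((\<lambda>z. H (z+1)) has_field_derivative G (z+1) * 1) (at z)"
    proof -
      have "((\<lambda>z. z+1) has_field_derivative 1) (at z)" by (auto intro!: derivative_eq_intros)
      then show ?thesis using DERIV_chain2[of H "G (z+1)" "\<lambda>z. z+1" z 1 UNIV] H[OF uhp_plus1[OF z]]
        by simp
    qed
    then have "((\<lambda>z. H (z+1) - H z) has_field_derivative G (z+1) * 1 - G z) (at z)"
      by (intro DERIV_diff H z)
    then show "((\<lambda>z. H (z+1) - H z) has_field_derivative 0) (at z within uhp)"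
      using T[OF z] by (simp add: has_field_derivative_at_within)
  qed
  then obtain c where c: "\<And>z. z \<in> uhp \<Longrightarrow> H (z+1) - H z = c" by blast
  have "\<exists>e. \<forall>z\<in>uhp. H (-1/z) - H z = e"
  proof (rule has_field_derivative_zero_constant[OF convex_uhp])
    fix z assume z: "z \<in> uhp"
    then have z0: "z \<noteq> 0" by (auto simp: uhp_def)
    have d: "((\<lambda>z. -1/z) has_field_derivative 1/z^2) (at z)"
      using z0 by (auto intro!: derivative_eq_intros simp: field_simps power2_eq_square)
    have "((\<lambda>z. H (-1/z)) has_field_derivative G (-1/z) * (1/z^2)) (at z)"
      using DERIV_chain2[of H "G (-1/z)" "\<lambda>z. -1/z" z "1/z^2" UNIV] H[OF uhp_inv[OF z]] d by auto
    then have "((\<lambda>z. H (-1/z) - H z) has_field_derivative G (-1/z) * (1/z^2) - G z) (at z)"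
      by (intro DERIV_diff H z)
    moreover have "G (-1/z) * (1/z^2) - G z = 0" using S[OF z] z0 by (simp add: field_simps)
    ultimately show "((\<lambda>z. H (-1/z) - H z) has_field_derivative 0) (at z within uhp)"
      by (simp add: has_field_derivative_at_within)
  qed
  then obtain e where e: "\<And>z. z \<in> uhp \<Longrightarrow> H (-1/z) - H z = e" by blast
  have iu: "\<i> \<in> uhp" by (simp add: uhp_def)
  have "e = 0" using e[OF iu] by (simp add: field_simps)
  define \<rho> where "\<rho> = Complex (-1/2) (sqrt 3 / 2)"
  have \<rho>u: "\<rho> \<in> uhp" by (simp add: \<rho>_def uhp_def)
  have \<rho>1u: "\<rho> + 1 \<in> uhp" by (simp add: \<rho>_def uhp_def)
  have "(\<rho> + 1) * \<rho> = -1"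
    by (simp add: \<rho>_def complex_eq_iff algebra_simps)
  moreover have "\<rho> + 1 \<noteq> 0" by (simp add: \<rho>_def complex_eq_iff)
  ultimately have r: "-1/(\<rho>+1) = \<rho>" by (simp add: field_simps)
  have "H \<rho> - H (\<rho> + 1) = 0" using e[OF \<rho>1u] \<open>e = 0\<close> r by simp
  then have "c = 0" using c[OF \<rho>u] by simp
  then show ?thesis using H c by auto
qed


definition qe :: "int \<Rightarrow> complex \<Rightarrow> complex" where
  "qe j z = exp (2 * of_real pi * \<i> * of_int j * z)"

lemma norm_qe: "norm (qe j z) = exp (-2 * pi * of_int j * Im z)"
  by (simp add: qe_def)

lemma qe_add: "qe i z * qe j z = qe (i+j) z"
  by (simp add: qe_def exp_add[symmetric] algebra_simps)

lemma qe_plus1: "qe j (z+1) = qe j z"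
proof -
  have e: "2 * of_real pi * \<i> * of_int j * (z+1) = 2 * of_real pi * \<i> * of_int j * z + 2 * of_real pi * \<i> * of_int j"
    by (simp add: algebra_simps)
  have "qe j (z+1) = qe j z * exp (2 * of_real pi * \<i> * of_int j)"
    unfolding qe_def e by (rule exp_add)
  moreover have "exp (2 * of_real pi * \<i> * of_int j) = 1"
    using exp_integer_2pi[of "of_int j"] by (simp add: algebra_simps)
  ultimately show ?thesis by simp
qed

lemma qe_deriv: "(qe j has_field_derivative (2 * of_real pi * \<i> * of_int j) * qe j z) (at z)"
  unfolding qe_def by (auto intro!: derivative_eq_intros)

definition smallexp :: "int \<Rightarrow> (complex \<Rightarrow> complex) \<Rightarrow> bool" where
  "smallexp J f \<longleftrightarrow> (\<exists>K. \<forall>z. Im z \<ge> 1 \<longrightarrow> norm (f z) \<le> K * exp (-2 * pi * of_int J * Im z))"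

lemma smallexp_K_nonneg:
  assumes "\<forall>z. Im z \<ge> 1 \<longrightarrow> norm (f z) \<le> K * exp (-2 * pi * of_int J * Im z)"
  shows "K \<ge> 0"
proof -
  have "1 \<le> Im \<i>" by simp
  then have "norm (f \<i>) \<le> K * exp (-2 * pi * of_int J * Im \<i>)" using assms by blast
  then have "0 \<le> K * exp (-2 * pi * of_int J * Im \<i>)" using norm_ge_zero[of "f \<i>"] by linarith
  then show ?thesis by (simp add: zero_le_mult_iff)
qed

lemma smallexp_mult:
  assumes "smallexp a f" "smallexp b g"
  shows "smallexp (a+b) (\<lambda>z. f z * g z)"
proof -
  obtain K1 where K1: "\<forall>z. Im z \<ge> 1 \<longrightarrow> norm (f z) \<le> K1 * exp (-2 * pi * of_int a * Im z)"
    using assms(1) unfolding smallexp_def by blast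
  obtain K2 where K2: "\<forall>z. Im z \<ge> 1 \<longrightarrow> norm (g z) \<le> K2 * exp (-2 * pi * of_int b * Im z)"
    using assms(2) unfolding smallexp_def by blast
  have "K1 \<ge> 0" by (rule smallexp_K_nonneg[OF K1])
  show ?thesis unfolding smallexp_def
  proof (intro exI allI impI)
    fix z :: complex assume z: "Im z \<ge> 1"
    have "norm (f z * g z) = norm (f z) * norm (g z)" by (simp add: norm_mult)
    also have "\<dots> \<le> (K1 * exp (-2 * pi * of_int a * Im z)) * (K2 * exp (-2 * pi * of_int b * Im z))"
      by (rule mult_mono) (use K1 K2 z \<open>K1 \<ge> 0\<close> in auto)
    also have "\<dots> = (K1 * K2) * exp (-2 * pi * of_int (a+b) * Im z)"
      by (simp add: exp_add[symmetric] algebra_simps)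
    finally show "norm (f z * g z) \<le> (K1 * K2) * exp (-2 * pi * of_int (a+b) * Im z)" .
  qed
qed

lemma smallexp_mono:
  assumes "smallexp b f" "a \<le> b" shows "smallexp a f"
proof -
  obtain K where K: "\<forall>z. Im z \<ge> 1 \<longrightarrow> norm (f z) \<le> K * exp (-2 * pi * of_int b * Im z)"
    using assms(1) unfolding smallexp_def by blast
  have "K \<ge> 0" by (rule smallexp_K_nonneg[OF K])
  show ?thesis unfolding smallexp_def
  proof (intro exI allI impI)
    fix z :: complex assume z: "Im z \<ge> 1"
    have "of_int a * Im z \<le> of_int b * Im z" using assms(2) z by (intro mult_right_mono) auto
    then have "exp (-2 * pi * of_int b * Im z) \<le> exp (-2 * pi * of_int a * Im z)" by simp
    then show "norm (f z) \<le> K * exp (-2 * pi * of_int a * Im z)"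
      using K z \<open>K \<ge> 0\<close> by (meson mult_left_mono order_trans)
  qed
qed

lemma smallexp_add:
  assumes "smallexp a f" "smallexp a g" shows "smallexp a (\<lambda>z. f z + g z)"
proof -
  obtain K1 where K1: "\<forall>z. Im z \<ge> 1 \<longrightarrow> norm (f z) \<le> K1 * exp (-2 * pi * of_int a * Im z)"
    using assms(1) unfolding smallexp_def by blast
  obtain K2 where K2: "\<forall>z. Im z \<ge> 1 \<longrightarrow> norm (g z) \<le> K2 * exp (-2 * pi * of_int a * Im z)"
    using assms(2) unfolding smallexp_def by blast
  show ?thesis unfolding smallexp_def
  proof (intro exI allI impI)
    fix z :: complex assume z: "Im z \<ge> 1"
    have "norm (f z + g z) \<le> norm (f z) + norm (g z)" by (rule norm_triangle_ineq)
    also have "\<dots> \<le> (K1 + K2) * exp (-2 * pi * of_int a * Im z)" using K1 K2 z by (simp add: algebra_simps add_mono)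
    finally show "norm (f z + g z) \<le> (K1 + K2) * exp (-2 * pi * of_int a * Im z)" .
  qed
qed

lemma smallexp_zero: "smallexp a (\<lambda>z. 0)"
  unfolding smallexp_def by (rule exI[of _ 0]) simp

lemma smallexp_sum:
  assumes "finite S" "\<And>i. i \<in> S \<Longrightarrow> smallexp a (f i)"
  shows "smallexp a (\<lambda>z. \<Sum>i\<in>S. f i z)"
  using assms
proof (induction S rule: finite_induct)
  case empty then show ?case by (simp add: smallexp_zero)
next
  case (insert x F)
  then show ?case by (simp add: smallexp_add)
qed

lemma smallexp_qe: "smallexp j (\<lambda>z. c * qe j z)"
  unfolding smallexp_def by (rule exI[of _ "norm c"]) (simp add: norm_mult norm_qe)

definition lp :: "(int \<Rightarrow> int) \<Rightarrow> int set \<Rightarrow> complex \<Rightarrow> complex" where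
  "lp c I z = (\<Sum>j\<in>I. of_int (c j) * qe j z)"

lemma smallexp_lp: "smallexp a (lp c {a..<b})"
  unfolding lp_def
  by (rule smallexp_sum) (auto intro: smallexp_mono[OF smallexp_qe])

lemma qexp_split:
  assumes h: "has_int_qexp f c" and low: "\<And>j. j < M \<Longrightarrow> c j = 0"
  shows "smallexp J (\<lambda>z. f z - lp c {M..<J} z)"
proof -
  have sum_at: "\<And>z. z \<in> uhp \<Longrightarrow> ((\<lambda>j. of_int (c j) * qe j z) has_sum f z) UNIV"
    using h unfolding has_int_qexp_def qe_def by auto
  define X where "X = UNIV - {M..<J}"
  have iu: "\<i> \<in> uhp" by (simp add: uhp_def)
  have "(\<lambda>j. of_int (c j) * qe j \<i>) summable_on UNIV" using sum_at[OF iu] by (auto simp: summable_on_def)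
  then have "(\<lambda>j. norm (of_int (c j) * qe j \<i>)) summable_on UNIV"
    by (rule summable_on_iff_abs_summable_on_complex[THEN iffD1])
  then have "(\<lambda>j. norm (of_int (c j) * qe j \<i>)) summable_on X"
    by (rule summable_on_subset_banach) simp
  then obtain T0 where T0: "((\<lambda>j. norm (of_int (c j) * qe j \<i>)) has_sum T0) X"
    by (auto simp: summable_on_def)
  show ?thesis unfolding smallexp_def
  proof (intro exI allI impI)
    fix z :: complex assume z: "Im z \<ge> 1"
    then have zu: "z \<in> uhp" by (simp add: uhp_def)
    have fin: "((\<lambda>j. of_int (c j) * qe j z) has_sum lp c {M..<J} z) {M..<J}"
      unfolding lp_def by (rule has_sum_finite) simp
    have tail: "((\<lambda>j. of_int (c j) * qe j z) has_sum (f z - lp c {M..<J} z)) X"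
      unfolding X_def by (rule has_sum_Diff[OF sum_at[OF zu] fin]) simp
    define E where "E = exp (-2 * pi * of_int J * (Im z - 1))"
    have T0E: "((\<lambda>j. norm (of_int (c j) * qe j \<i>) * E) has_sum T0 * E) X"
      by (rule has_sum_cmult_left[OF T0])
    have "norm (f z - lp c {M..<J} z) \<le> T0 * E"
    proof (rule norm_infsum_le[OF tail T0E])
      fix j assume j: "j \<in> X"
      show "norm (of_int (c j) * qe j z) \<le> norm (of_int (c j) * qe j \<i>) * E"
      proof (cases "c j = 0")
        case True then show ?thesis by simp
      next
        case False
        then have "j \<ge> J" using j low unfolding X_def by (meson DiffE atLeastLessThan_iff not_le)
        then have h1: "0 \<le> 2 * pi * ((of_int j - of_int J) * (Im z - 1))" using z by (intro mult_nonneg_nonneg) auto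
        have h2: "-2 * pi * of_int j * Im z = (-2 * pi * of_int j + (-2 * pi * of_int J * (Im z - 1))) - 2 * pi * ((of_int j - of_int J) * (Im z - 1))"
          by (simp add: algebra_simps)
        have "exp (-2 * pi * of_int j * Im z) \<le> exp (-2 * pi * of_int j + (-2 * pi * of_int J * (Im z - 1)))"
          using h1 h2 by simp
        then have "exp (-2 * pi * of_int j * Im z) \<le> exp (-2 * pi * of_int j) * E"
          unfolding E_def by (simp only: exp_add[symmetric])
        then show ?thesis by (simp add: norm_mult norm_qe mult.assoc mult_left_mono)
      qed
    qed
    also have "T0 * E = (T0 * exp (2 * pi * of_int J)) * exp (-2 * pi * of_int J * Im z)"
      unfolding E_def by (simp add: exp_add[symmetric] algebra_simps)
    finally show "norm (f z - lp c {M..<J} z) \<le> (T0 * exp (2 * pi * of_int J)) * exp (-2 * pi * of_int J * Im z)" .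
  qed
qed

definition prim :: "int \<Rightarrow> complex \<Rightarrow> complex" where
  "prim e z = (if e = 0 then z else qe e z / (2 * of_real pi * \<i> * of_int e))"

lemma prim_deriv: "(prim e has_field_derivative qe e z) (at z)"
proof (cases "e = 0")
  case True
  then have "prim e = (\<lambda>z. z)" by (auto simp: prim_def)
  moreover have "qe e z = 1" using True by (simp add: qe_def)
  ultimately show ?thesis by simp
next
  case False
  then have p: "prim e = (\<lambda>z. qe e z / (2 * of_real pi * \<i> * of_int e))" by (auto simp: prim_def)
  have "((\<lambda>z. qe e z / (2 * of_real pi * \<i> * of_int e)) has_field_derivative
      ((2 * of_real pi * \<i> * of_int e) * qe e z) / (2 * of_real pi * \<i> * of_int e)) (at z)"
    by (rule DERIV_cdivide[OF qe_deriv])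
  then show ?thesis using False p by simp
qed

lemma prim_plus1: "prim e (z+1) - prim e z = (if e = 0 then 1 else 0)"
  by (simp add: prim_def qe_plus1)


lemma rep_coset_slash:
  assumes inv: "\<And>\<delta> z. \<delta> \<in> Gamma0 N \<Longrightarrow> z \<in> uhp \<Longrightarrow> slash w g \<delta> z = g z"
    and \<gamma>: "\<gamma> \<in> SL2Z" and z: "z \<in> uhp"
  shows "slash w g (rep (coset N \<gamma>)) z = slash w g \<gamma> z"
proof -
  have "rep (coset N \<gamma>) \<in> coset N \<gamma>" using rep_props(1)[OF coset_in_Cos[OF \<gamma>]] .
  then obtain \<delta> where d: "\<delta> \<in> Gamma0 N" "rep (coset N \<gamma>) = mmul \<delta> \<gamma>" unfolding coset_def by auto
  have "slash w g (mmul \<delta> \<gamma>) z = slash w (slash w g \<delta>) \<gamma> z"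
    by (rule slash_mmul[OF Gamma0_SL2Z[OF d(1)] \<gamma> z])
  also have "\<dots> = slash w g \<gamma> z"
    by (rule slash_cong[OF _ \<gamma> z]) (use inv d in auto)
  finally show ?thesis using d by simp
qed

lemma trace_inv:
  assumes N: "N > 0"
    and inv: "\<And>\<delta> z. \<delta> \<in> Gamma0 N \<Longrightarrow> z \<in> uhp \<Longrightarrow> slash w g \<delta> z = g z"
    and s: "s \<in> SL2Z" and z: "z \<in> uhp"
  shows "slash w (\<lambda>z. \<Sum>C\<in>Cos N. slash w g (rep C) z) s z = (\<Sum>C\<in>Cos N. slash w g (rep C) z)"
proof -
  define \<pi> where "\<pi> = (\<lambda>C. coset N (mmul (rep C) s))"
  have "slash w (\<lambda>z. \<Sum>C\<in>Cos N. slash w g (rep C) z) s z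
      = (\<Sum>C\<in>Cos N. slash w (slash w g (rep C)) s z)"
    by (simp add: slash_eq sum_distrib_left)
  also have "\<dots> = (\<Sum>C\<in>Cos N. slash w g (rep (\<pi> C)) z)"
  proof (rule sum.cong[OF refl])
    fix C assume C: "C \<in> Cos N"
    have r: "rep C \<in> SL2Z" using rep_props(2)[OF C] .
    have "slash w (slash w g (rep C)) s z = slash w g (mmul (rep C) s) z"
      using slash_mmul[OF r s z] by simp
    also have "\<dots> = slash w g (rep (\<pi> C)) z"
      unfolding \<pi>_def using rep_coset_slash[OF inv SL2Z_mmul'[OF r s] z] by simp
    finally show "slash w (slash w g (rep C)) s z = slash w g (rep (\<pi> C)) z" .
  qed
  also have "\<dots> = (\<Sum>C\<in>\<pi> ` Cos N. slash w g (rep C) z)"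
    by (rule sum.reindex[symmetric, unfolded o_def]) (use rmul_inj[OF s] \<pi>_def in simp)
  also have "\<pi> ` Cos N = Cos N" unfolding \<pi>_def by (rule rmul_perm[OF s N])
  finally show ?thesis .
qed

lemma trace_holo:
  assumes "g holomorphic_on uhp"
  shows "(\<lambda>z. \<Sum>C\<in>Cos N. slash w g (rep C) z) holomorphic_on uhp"
proof (rule holomorphic_on_sum)
  fix C assume "C \<in> Cos N"
  then show "slash w g (rep C) holomorphic_on uhp" using slash_holo[OF assms rep_props(2)] by blast
qed

lemma not_cusp:
  assumes C: "C \<in> Cos N" and ne: "C \<noteq> coset N idm"
  shows "\<not> cusp_equiv_infty N (rep C)" "rep C \<in> SL2Z"
proof -
  have r: "rep C \<in> SL2Z" using rep_props(2)[OF C] .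
  then show "rep C \<in> SL2Z" .
  have nG: "rep C \<notin> Gamma0 N"
  proof
    assume "rep C \<in> Gamma0 N"
    then have "rep C \<in> coset N idm" unfolding coset_def by (metis image_eqI mmul_idm(1))
    then have "coset N (rep C) = coset N idm" by (rule coset_mem_eq)
    then show False using rep_props(3)[OF C] ne by simp
  qed
  obtain a b c d where g: "rep C = (a,b,c,d)" by (cases "rep C") auto
  show "\<not> cusp_equiv_infty N (rep C)"
  proof
    assume "cusp_equiv_infty N (rep C)"
    then obtain a' b' c' d' where dl: "(a',b',c',d') \<in> Gamma0 N" "c'*a + d'*c = 0"
      using g by (auto simp: cusp_equiv_infty_def)
    define \<delta> where "\<delta> = (a',b',c',d')"
    have "mmul \<delta> (rep C) \<in> SL2Z" using SL2Z_mmul'[OF Gamma0_SL2Z r] dl \<delta>_def by blast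
    then have m: "mmul \<delta> (rep C) \<in> Gamma0 N" using dl g \<delta>_def by (simp add: SL2Z_def Gamma0_def mmul_def)
    have "rep C = mmul (minv \<delta>) (mmul \<delta> (rep C))"
      using minv_mmul[OF Gamma0_SL2Z[OF dl(1)]] \<delta>_def by (simp add: mmul_assoc[symmetric])
    also have "\<dots> \<in> Gamma0 N" using mmul_Gamma0[OF minv_Gamma0 m] dl \<delta>_def by blast
    finally show False using nG by simp
  qed
qed

lemma coeff_sum:
  fixes A C :: "int \<Rightarrow> int" and n m k :: int
  assumes n: "n \<ge> 2" and m: "m \<ge> -1"
    and phi_lead: "A (- n) = 1"
    and phi_shape: "\<forall>j < - 1. j \<noteq> - n \<longrightarrow> A j = 0"
    and F_lead: "C (- m) = -1"
    and F_shape: "\<forall>j\<le>1. j \<noteq> - m \<longrightarrow> C j = 0"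
    and I1: "I1 = {-n..<max 1 (1 - min (-m) 1)}" and I2: "I2 = {min (-m) 1..<n+1}"
  shows "(\<Sum>i\<in>I1. \<Sum>j\<in>I2. if i + j = 0 then A i * C j else 0) = C n - A m"
proof -
  have inner: "(\<Sum>j\<in>I2. if i + j = 0 then A i * C j else 0) = (if -i \<in> I2 then A i * C (-i) else 0)" for i
  proof -
    have "(\<Sum>j\<in>I2. if i + j = 0 then A i * C j else 0) = (\<Sum>j\<in>I2. if j = -i then A i * C j else 0)"
      by (rule sum.cong) auto
    also have "\<dots> = (if -i \<in> I2 then A i * C (-i) else 0)" using I2 by (simp add: sum.delta')
    finally show ?thesis .
  qed
  have "(\<Sum>i\<in>I1. \<Sum>j\<in>I2. if i + j = 0 then A i * C j else 0) = (\<Sum>i\<in>I1. if -i \<in> I2 then A i * C (-i) else 0)"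
    using inner by simp
  also have "\<dots> = (\<Sum>i\<in>{-n, m}. if -i \<in> I2 then A i * C (-i) else 0)"
  proof (rule sum.mono_neutral_right)
    show "finite I1" using I1 by simp
    show "{-n, m} \<subseteq> I1" using I1 n m by auto
    show "\<forall>i\<in>I1 - {-n, m}. (if -i \<in> I2 then A i * C (-i) else 0) = 0"
    proof
      fix i assume i: "i \<in> I1 - {-n, m}"
      show "(if -i \<in> I2 then A i * C (-i) else 0) = 0"
      proof (cases "i < -1")
        case True then show ?thesis using phi_shape i by auto
      next
        case False then show ?thesis using F_shape i by auto
      qed
    qed
  qed
  also have "\<dots> = A (-n) * C n + A m * C (-m)" using I2 n m by auto
  also have "\<dots> = C n - A m" using phi_lead F_lead by simp
  finally show ?thesis .
qed


theorem theorem1p2: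
  fixes k N n m :: int and \<phi> F :: "complex \<Rightarrow> complex" and A C :: "int \<Rightarrow> int"
  assumes kN: "(k, N) \<in> {(2,27), (2,32), (2,36), (2,49), (4,9)}"
    and n: "n \<ge> 2"
    and m: "if k = 2 then m = -1 \<or> m \<ge> 1 else m \<ge> -1"
    and phi_form: "wh_modular_form (2 - k) N \<phi>"
    and phi_exp: "has_int_qexp \<phi> A"
    and phi_lead: "A (- n) = 1"
    and phi_shape: "\<forall>j < - 1. j \<noteq> - n \<longrightarrow> A j = 0"
    and phi_const: "k = 2 \<longrightarrow> A 0 = 0"
    and F_form: "wh_cusp_form k N F"
    and F_exp: "has_int_qexp F C"
    and F_lead: "C (- m) = -1"
    and F_shape: "\<forall>j\<le>1. j \<noteq> - m \<longrightarrow> C j = 0"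
  shows "C n = A m"
proof -
  have N: "N > 0" using kN by auto
  have m1: "m \<ge> -1" using m by (auto split: if_splits)
  have phi_hol: "\<phi> holomorphic_on uhp"
    and phi_inv: "\<And>\<gamma> z. \<gamma> \<in> Gamma0 N \<Longrightarrow> z \<in> uhp \<Longrightarrow> slash (2-k) \<phi> \<gamma> z = \<phi> z"
    and phi_cusp: "\<And>\<gamma>. \<gamma> \<in> SL2Z \<Longrightarrow> \<not> cusp_equiv_infty N \<gamma> \<Longrightarrow> (\<exists>B. \<forall>z. Im z \<ge> 1 \<longrightarrow> norm (slash (2-k) \<phi> \<gamma> z) \<le> B)"
    using phi_form unfolding wh_modular_form_def by auto
  have F_hol: "F holomorphic_on uhp"
    and F_inv: "\<And>\<gamma> z. \<gamma> \<in> Gamma0 N \<Longrightarrow> z \<in> uhp \<Longrightarrow> slash k F \<gamma> z = F z"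
    and F_van: "\<And>\<gamma>. \<gamma> \<in> SL2Z \<Longrightarrow> \<not> cusp_equiv_infty N \<gamma> \<Longrightarrow> (\<forall>\<epsilon>>0. \<exists>Y. \<forall>z. Im z \<ge> Y \<longrightarrow> norm (slash k F \<gamma> z) \<le> \<epsilon>)"
    using F_form unfolding wh_cusp_form_def wh_modular_form_def by auto
  define g where "g = (\<lambda>z. \<phi> z * F z)"
  have g_hol: "g holomorphic_on uhp" unfolding g_def using phi_hol F_hol by (intro holomorphic_intros)
  have gsl: "slash 2 g \<gamma> z = slash (2-k) \<phi> \<gamma> z * slash k F \<gamma> z" if "\<gamma> \<in> SL2Z" "z \<in> uhp" for \<gamma> z
    using slash_mult[OF that, of "2-k" k \<phi> F] by (simp add: g_def)
  have g_inv: "slash 2 g \<delta> z = g z" if "\<delta> \<in> Gamma0 N" "z \<in> uhp" for \<delta> z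
    using gsl[OF Gamma0_SL2Z[OF that(1)] that(2)] phi_inv[OF that] F_inv[OF that] by (simp add: g_def)
  define G where "G = (\<lambda>z. \<Sum>C\<in>Cos N. slash 2 g (rep C) z)"
  have G_hol: "G holomorphic_on uhp" unfolding G_def by (rule trace_holo[OF g_hol])
  have G_inv: "slash 2 G s z = G z" if "s \<in> SL2Z" "z \<in> uhp" for s z
    unfolding G_def by (rule trace_inv[OF N g_inv that])
  have GT: "G (z+1) = G z" if "z \<in> uhp" for z
  proof -
    have "(1,1,0,1) \<in> SL2Z" by (simp add: SL2Z_def)
    from G_inv[OF this that] show ?thesis by (simp add: slash_def moebius_def)
  qed
  have GS: "G (-1/z) = z^2 * G z" if "z \<in> uhp" for z
  proof -
    have z0: "z \<noteq> 0" using that by (auto simp: uhp_def)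
    have "(0,-1,1,0) \<in> SL2Z" by (simp add: SL2Z_def)
    from G_inv[OF this that] have "z powi (-2) * G (-1/z) = G z" by (simp add: slash_def moebius_def)
    then show ?thesis using z0 by (simp add: power_int_minus field_simps)
  qed
  obtain H where H: "\<And>z. z \<in> uhp \<Longrightarrow> (H has_field_derivative G z) (at z)"
      and H1: "\<And>z. z \<in> uhp \<Longrightarrow> H (z+1) = H z"
    using level1[OF G_hol GT GS] by blast

  define C0 where "C0 = coset N idm"
  have C0: "C0 \<in> Cos N" unfolding C0_def by (rule coset_in_Cos[OF idm_SL2Z])
  define R where "R = (\<lambda>z. \<Sum>C\<in>Cos N - {C0}. slash 2 g (rep C) z)"
  have GgR: "G z = g z + R z" if "z \<in> uhp" for z
  proof -
    have "G z = slash 2 g (rep C0) z + R z"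
      unfolding G_def R_def by (rule sum.remove[OF finite_Cos[OF N] C0])
    moreover have "slash 2 g (rep C0) z = g z"
      unfolding C0_def using rep_coset_slash[OF g_inv idm_SL2Z that] by (simp add: slash_idm)
    ultimately show ?thesis by simp
  qed

  define Fi where "Fi = filtercomap Im (at_top :: real filter)"
  have ev_Im: "eventually (\<lambda>z. Im z \<ge> Y) Fi" for Y
    unfolding Fi_def eventually_filtercomap_at_top_linorder by auto
  have R0: "(R \<longlongrightarrow> 0) Fi"
    unfolding R_def
  proof (rule tendsto_null_sum)
    fix C assume C: "C \<in> Cos N - {C0}"
    then have nc: "\<not> cusp_equiv_infty N (rep C)" and r: "rep C \<in> SL2Z"
      using not_cusp[of C N] C0_def by auto
    obtain B where B: "\<forall>z. Im z \<ge> 1 \<longrightarrow> norm (slash (2-k) \<phi> (rep C) z) \<le> B"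
      using phi_cusp[OF r nc] by blast
    have Fl: "(slash k F (rep C) \<longlongrightarrow> 0) Fi"
    proof (rule tendstoI)
      fix e :: real assume e: "e > 0"
      obtain Y where Y: "\<forall>z. Im z \<ge> Y \<longrightarrow> norm (slash k F (rep C) z) \<le> e/2"
        using F_van[OF r nc] e by (meson half_gt_zero)
      show "eventually (\<lambda>z. dist (slash k F (rep C) z) 0 < e) Fi"
        using ev_Im[of Y] by eventually_elim (use Y e in auto)
    qed
    show "((\<lambda>z. slash 2 g (rep C) z) \<longlongrightarrow> 0) Fi"
    proof (rule tendsto_0_le[OF Fl])
      show "eventually (\<lambda>z. norm (slash 2 g (rep C) z) \<le> norm (slash k F (rep C) z) * B) Fi"
        using ev_Im[of 1]
      proof eventually_elim
        case (elim z)
        then have zu: "z \<in> uhp" by (simp add: uhp_def)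
        have "norm (slash 2 g (rep C) z) = norm (slash k F (rep C) z) * norm (slash (2-k) \<phi> (rep C) z)"
          using gsl[OF r zu] by (simp add: norm_mult)
        also have "\<dots> \<le> norm (slash k F (rep C) z) * B"
          using B elim by (intro mult_left_mono) auto
        finally show ?case .
      qed
    qed
  qed

  define MF where "MF = min (-m) 1"
  define J1 where "J1 = max 1 (1 - MF)"
  define I1 where "I1 = {-n..<J1}"
  define I2 where "I2 = {MF..<n+1}"
  define E1 where "E1 = (\<lambda>z. \<phi> z - lp A I1 z)"
  define E2 where "E2 = (\<lambda>z. F z - lp C I2 z)"
  have sE1: "smallexp J1 E1" unfolding E1_def I1_def
    by (rule qexp_split[OF phi_exp]) (use phi_shape n in auto)
  have sE2: "smallexp (n+1) E2" unfolding E2_def I2_def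
    by (rule qexp_split[OF F_exp]) (use F_shape in \<open>auto simp: MF_def\<close>)
  define P where "P = (\<lambda>z. lp A I1 z * lp C I2 z)"
  define Tt where "Tt = (\<lambda>z. g z - P z)"
  have Tt_eq: "Tt = (\<lambda>z. (lp A I1 z * E2 z + E1 z * lp C I2 z) + E1 z * E2 z)"
    by (rule ext) (simp add: Tt_def g_def P_def E1_def E2_def algebra_simps)
  have sT: "smallexp 1 Tt"
  proof -
    have a: "smallexp 1 (\<lambda>z. lp A I1 z * E2 z)"
      using smallexp_mult[OF smallexp_lp[where c=A and a="-n" and b=J1] sE2] unfolding I1_def
      by (rule smallexp_mono) simp
    have b: "smallexp 1 (\<lambda>z. E1 z * lp C I2 z)"
      using smallexp_mult[OF sE1 smallexp_lp[where c=C and a=MF and b="n+1"]] unfolding I2_def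
      by (rule smallexp_mono) (simp add: J1_def)
    have c: "smallexp 1 (\<lambda>z. E1 z * E2 z)"
      using smallexp_mult[OF sE1 sE2] by (rule smallexp_mono) (use n in \<open>simp add: J1_def\<close>)
    show ?thesis unfolding Tt_eq by (intro smallexp_add a b c)
  qed
  have T0: "(Tt \<longlongrightarrow> 0) Fi"
  proof -
    obtain K where K: "\<forall>z. Im z \<ge> 1 \<longrightarrow> norm (Tt z) \<le> K * exp (-2 * pi * of_int 1 * Im z)"
      using sT unfolding smallexp_def by blast
    have l1: "((\<lambda>y::real. exp (-2 * pi * y)) \<longlongrightarrow> 0) at_top" by real_asymp
    have l2: "((\<lambda>z. exp (-2 * pi * Im z)) \<longlongrightarrow> 0) Fi"
      unfolding Fi_def using filterlim_compose[OF l1 filterlim_filtercomap] by (simp add: o_def)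
    show ?thesis
    proof (rule tendsto_0_le[OF l2])
      show "eventually (\<lambda>z. norm (Tt z) \<le> norm (exp (-2 * pi * Im z)) * K) Fi"
        using ev_Im[of 1] by eventually_elim (use K in \<open>auto simp: mult.commute\<close>)
    qed
  qed
  have TR0: "((\<lambda>z. Tt z + R z) \<longlongrightarrow> 0) Fi" using tendsto_add[OF T0 R0] by simp

  define Lp where "Lp = (\<lambda>z. \<Sum>i\<in>I1. \<Sum>j\<in>I2. of_int (A i * C j) * prim (i+j) z)"
  have Lp_deriv: "(Lp has_field_derivative P z) (at z)" for z
  proof -
    have "(Lp has_field_derivative (\<Sum>i\<in>I1. \<Sum>j\<in>I2. of_int (A i * C j) * qe (i+j) z)) (at z)"
      unfolding Lp_def by (intro DERIV_sum DERIV_cmult prim_deriv)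
    moreover have "(\<Sum>i\<in>I1. \<Sum>j\<in>I2. of_int (A i * C j) * qe (i+j) z) = P z"
      unfolding P_def lp_def sum_product
      by (intro sum.cong refl) (simp add: qe_add[symmetric] algebra_simps)
    ultimately show ?thesis by simp
  qed
  define b0 where "b0 = (\<Sum>i\<in>I1. \<Sum>j\<in>I2. if i + j = 0 then A i * C j else 0)"
  have Lp1: "Lp (z+1) - Lp z = of_int b0" for z
  proof -
    have "Lp (z+1) - Lp z = (\<Sum>i\<in>I1. \<Sum>j\<in>I2. of_int (A i * C j) * (prim (i+j) (z+1) - prim (i+j) z))"
      unfolding Lp_def by (simp add: sum_subtractf[symmetric] algebra_simps)
    also have "\<dots> = of_int b0"
      unfolding b0_def prim_plus1 by (simp add: of_int_sum[symmetric] if_distrib cong: if_cong)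
    finally show ?thesis .
  qed
  have b0_small: "norm (of_int b0 :: complex) \<le> e" if e: "e > 0" for e
  proof -
    obtain Y where Y: "\<forall>z. Im z \<ge> Y \<longrightarrow> norm (Tt z + R z) < e"
      using TR0 e unfolding tendsto_iff Fi_def eventually_filtercomap_at_top_linorder
      by (fastforce simp: dist_norm)
    define Y' where "Y' = max Y 1"
    define S where "S = {z. Im z \<ge> Y'}"
    define Kf where "Kf = (\<lambda>z. H z - Lp z)"
    have Su: "z \<in> uhp" if "z \<in> S" for z using that by (auto simp: S_def Y'_def uhp_def)
    have "norm (Kf (\<i> * of_real Y' + 1) - Kf (\<i> * of_real Y')) \<le> e * norm ((\<i> * of_real Y' + 1) - \<i> * of_real Y')"
    proof (rule field_differentiable_bound)
      show "convex S" unfolding S_def by (rule convex_halfspace_Im_ge)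
      fix z assume z: "z \<in> S"
      have "(Kf has_field_derivative G z - P z) (at z)"
        unfolding Kf_def by (intro DERIV_diff H Su z Lp_deriv)
      then show "(Kf has_field_derivative Tt z + R z) (at z within S)"
        using GgR[OF Su[OF z]] by (simp add: Tt_def algebra_simps has_field_derivative_at_within)
      show "norm (Tt z + R z) \<le> e" using Y z by (auto simp: S_def Y'_def less_imp_le)
    qed (auto simp: S_def)
    moreover have "Kf (\<i> * of_real Y' + 1) - Kf (\<i> * of_real Y') = - of_int b0"
    proof -
      have "\<i> * of_real Y' \<in> uhp" by (simp add: uhp_def Y'_def)
      then show ?thesis using H1[of "\<i> * of_real Y'"] Lp1[of "\<i> * of_real Y'"] by (simp add: Kf_def algebra_simps)
    qed
    ultimately show ?thesis by simp
  qed
  have "b0 = 0"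
  proof (rule ccontr)
    assume "b0 \<noteq> 0"
    then have "norm (of_int b0 :: complex) > 0" by simp
    then show False using b0_small[of "norm (of_int b0 :: complex) / 2"] by simp
  qed
  moreover have "b0 = C n - A m"
    unfolding b0_def
    by (rule coeff_sum[OF n m1 phi_lead phi_shape F_lead F_shape]) (simp_all add: I1_def I2_def J1_def MF_def)
  ultimately show ?thesis by simp
qed

end
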